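(* Let $\nu>0$, $q\ge0$, $k\ge1$, let $\pi_0,\ldots,\pi_k>0$ with $\sum_j\pi_j=1$, let $\lambda_0,\ldots,\lambda_k\ge1$, and let $c_0,\ldots,c_k\in\mathbb R$ satisfy \[ \sum_{j=0}^k c_j=1,\qquad \sum_{j=0}^k c_j\lambda_j=0. \] Then \[ K_{q,k}:=\nu\left[\sum_{j=0}^k\frac{c_j^2\lambda_j^q}{\pi_j}-1\right]>0. \]
   Context: In the application, $\lambda_j$ are the noise scale factors of a Richardson zero-noise-extrapolation rule of order $k$ (so the coefficients also satisfy $\sum_j c_j\lambda_j^m=0$ for $m=1,\ldots,k$), $\pi_j$ are the fractions of the total shot budget allocated to scale $\lambda_j$, and $\nu\epsilon^q$ is the leading term of the single-shot variance $v(\epsilon)$; $K_{q,k}\epsilon^q/B$ is then the leading excess variance of the Richardson estimator over the unmitigated estimator with budget $B$. *)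

theory Defs
  imports "HOL-Analysis.Analysis"
begin

end

theory Submission
  imports Defs
begin

theorem proposition2:
  fixes nu q :: real and k :: nat
    and p lam c :: "nat \<Rightarrow> real"
  assumes "nu > 0" and "q \<ge> 0" and "k \<ge> 1"
    and "\<And>j. j \<le> k \<Longrightarrow> p j > 0"
    and "(\<Sum>j\<le>k. p j) = 1"
    and "\<And>j. j \<le> k \<Longrightarrow> lam j \<ge> 1"
    and "(\<Sum>j\<le>k. c j) = 1"
    and "(\<Sum>j\<le>k. c j * lam j) = 0"
  shows "nu * ((\<Sum>j\<le>k. (c j)\<^sup>2 * lam j powr q / p j) - 1) > 0"
proof -
  define s where "s = (\<Sum>j\<le>k. \<bar>c j\<bar>)"
  have ex: "\<exists>j\<le>k. c j < 0"
  proof (rule ccontr)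
    assume "\<not> ?thesis"
    hence "\<And>j. j \<le> k \<Longrightarrow> c j \<le> c j * lam j"
      using assms(6) by (metis atMost_iff linorder_not_le mult_le_cancel_left1)
    hence "(\<Sum>j\<le>k. c j) \<le> (\<Sum>j\<le>k. c j * lam j)" by (intro sum_mono) auto
    thus False using assms(7,8) by simp
  qed
  then obtain j0 where j0: "j0 \<le> k" "c j0 < 0" by blast
  have "(\<Sum>j\<le>k. c j) < s"
    unfolding s_def
  proof (rule sum_strict_mono_ex1)
    show "\<forall>j\<in>{..k}. c j \<le> \<bar>c j\<bar>" by auto
    show "\<exists>j\<in>{..k}. c j < \<bar>c j\<bar>" using j0 by (intro bexI[of _ j0]) auto
  qed auto
  hence s1: "s > 1" using assms(7) by simp
  have "0 \<le> (\<Sum>j\<le>k. (\<bar>c j\<bar> - s * p j)\<^sup>2 / p j)"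
    by (intro sum_nonneg) (simp add: assms(4) less_imp_le)
  also have "\<dots> = (\<Sum>j\<le>k. (c j)\<^sup>2 / p j - 2 * s * \<bar>c j\<bar> + s\<^sup>2 * p j)"
  proof (rule sum.cong)
    fix j assume "j \<in> {..k}"
    hence "p j > 0" using assms(4) by auto
    thus "(\<bar>c j\<bar> - s * p j)\<^sup>2 / p j = (c j)\<^sup>2 / p j - 2 * s * \<bar>c j\<bar> + s\<^sup>2 * p j"
      by (simp add: field_simps power2_eq_square)
  qed simp
  also have "\<dots> = (\<Sum>j\<le>k. (c j)\<^sup>2 / p j) - 2 * s * s + s\<^sup>2 * 1"
    unfolding sum.distrib sum_subtractf s_def assms(5)[symmetric]
    by (simp add: sum_distrib_left)
  finally have cs: "(\<Sum>j\<le>k. (c j)\<^sup>2 / p j) \<ge> s\<^sup>2" by (simp add: power2_eq_square)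
  have "(\<Sum>j\<le>k. (c j)\<^sup>2 / p j) \<le> (\<Sum>j\<le>k. (c j)\<^sup>2 * lam j powr q / p j)"
  proof (rule sum_mono)
    fix j assume "j \<in> {..k}"
    hence pj: "p j > 0" and l: "lam j \<ge> 1" using assms(4,6) by auto
    have "1 \<le> lam j powr q" using l assms(2) by (simp add: ge_one_powr_ge_zero)
    hence "(c j)\<^sup>2 * 1 \<le> (c j)\<^sup>2 * lam j powr q" by (intro mult_left_mono) auto
    thus "(c j)\<^sup>2 / p j \<le> (c j)\<^sup>2 * lam j powr q / p j"
      using pj by (simp add: divide_right_mono)
  qed
  moreover have "s\<^sup>2 > 1" using s1 by (simp add: one_less_power)
  ultimately have "(\<Sum>j\<le>k. (c j)\<^sup>2 * lam j powr q / p j) - 1 > 0" using cs by linarith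
  thus ?thesis using assms(1) by simp
qed

end
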